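(* Let $\beta>0$, $\tilde\sigma\in[0,1)$ and $(\tau,\theta)\in\mathcal R_{\tilde\sigma}$. Define the $2m\times 2m$ matrix $$Q=\begin{bmatrix}(3-3\tau-2\tilde\sigma)\beta I&2(1-\tau-\tilde\sigma)I\\ 2(1-\tau-\tilde\sigma)I&\frac{4-\tau-\theta-2\tilde\sigma}{\beta}I\end{bmatrix}$$ and the scalar $\vartheta=\sqrt{(3-3\tau-2\tilde\sigma)(4-\tau-\theta-2\tilde\sigma)}-2(1-\tau-\tilde\sigma)$. Then $Q$ is symmetric positive definite and $\vartheta>0$. Moreover, for any $(y,\gamma)\in\mathbb{R}^m\times\mathbb{R}^m$, $\|(y,\gamma)\|_Q^2\ge-2\vartheta\langle y,\gamma\rangle$.
   Context: $I$ is the $m\times m$ identity; $\|z\|_Q=\sqrt{\langle Qz,z\rangle}$. $\mathcal R_{\tilde\sigma}:=\{(\tau,\theta):\tau\in(-1,1-\tilde\sigma),\ \tau+\theta>0,\ (1-\tau^2)(2-\tau-\theta-\tilde\sigma)-(1-\theta)^2(1-\tau-\tilde\sigma)>0\}$. *)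

theory Defs
  imports "HOL-Analysis.Analysis"
begin

definition R_region :: "real \<Rightarrow> real \<Rightarrow> real \<Rightarrow> bool" where
  "R_region s tau theta \<longleftrightarrow>
     -1 < tau \<and> tau < 1 - s \<and> tau + theta > 0 \<and>
     (1 - tau^2) * (2 - tau - theta - s) - (1 - theta)^2 * (1 - tau - s) > 0"

text \<open>Vectors in R^(2m) are indexed by the sum type 'm + 'm: Inl i is the i-th
  coordinate of the first block, Inr i the i-th coordinate of the second block.\<close>
definition stack :: "real^'m::finite \<Rightarrow> real^'m \<Rightarrow> real^('m + 'm)" where
  "stack y g = (\<chi> k. case k of Inl i \<Rightarrow> y $ i | Inr i \<Rightarrow> g $ i)"

definition Qmat :: "real \<Rightarrow> real \<Rightarrow> real \<Rightarrow> real \<Rightarrow> real^('m::finite + 'm)^('m + 'm)" where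
  "Qmat beta s tau theta =
     (\<chi> k l.
        (case k of
           Inl i \<Rightarrow> (case l of
               Inl j \<Rightarrow> (if i = j then (3 - 3 * tau - 2 * s) * beta else 0)
             | Inr j \<Rightarrow> (if i = j then 2 * (1 - tau - s) else 0))
         | Inr i \<Rightarrow> (case l of
               Inl j \<Rightarrow> (if i = j then 2 * (1 - tau - s) else 0)
             | Inr j \<Rightarrow> (if i = j then (4 - tau - theta - 2 * s) / beta else 0))))"

definition vartheta :: "real \<Rightarrow> real \<Rightarrow> real \<Rightarrow> real" where
  "vartheta s tau theta =
     sqrt ((3 - 3 * tau - 2 * s) * (4 - tau - theta - 2 * s)) - 2 * (1 - tau - s)"

definition sym_pos_def :: "real^'n^'n \<Rightarrow> bool" where
  "sym_pos_def A \<longleftrightarrow> transpose A = A \<and> (\<forall>x. x \<noteq> 0 \<longrightarrow> x \<bullet> (A *v x) > 0)"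

definition Qnorm_sq :: "real^'n^'n \<Rightarrow> real^'n \<Rightarrow> real" where
  "Qnorm_sq A z = (A *v z) \<bullet> z"

end

theory Submission
  imports Defs
begin

lemma key: "(u::real) > 0 \<Longrightarrow> v > 0 \<Longrightarrow> w > 0 \<Longrightarrow> s \<ge> 0 \<Longrightarrow>
   (u+s)* w * v > (u-v)^2*u \<Longrightarrow> u \<ge> 3*(v+w) \<Longrightarrow>
   s*(u+v+w) > u*(u - 3*(v+w))"
proof -
  assume h: "(u::real) > 0" "v > 0" "w > 0" "s \<ge> 0" "(u+s)* w * v > (u-v)^2*u" "u \<ge> 3*(v+w)"
  define p where "p = v + w"
  have p0: "p > 0" using h by (simp add: p_def)
  have up: "u \<ge> 3*p" using h by (simp add: p_def)
  have e1: "p^2 - 4* w * v = (v-w)^2" unfolding p_def by (simp add: power2_eq_square algebra_simps)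
  have 1: "4* w * v \<le> p^2" using e1 by (metis diff_ge_0_iff_ge zero_le_power2)
  have 2: "(u-v)^2 \<ge> (u-p)^2" using h p0 up by (intro power_mono) (auto simp: p_def)
  have 3: "(u+s)*(4* w * v) \<le> (u+s)*p^2" using 1 h by (intro mult_left_mono) auto
  have 4: "(u-p)^2*u \<le> (u-v)^2*u" using 2 h by (intro mult_right_mono) auto
  have 5: "(u+s)*p^2 > 4*(u-p)^2*u" using 3 4 h(5) by (simp add: algebra_simps)
  have e6: "(u+s)*p^2 - 4*(u-p)^2*u = s*p^2 - u*((2*u-3*p)*(2*u-p))" by (simp add: algebra_simps power2_eq_square)
  have 6: "s*p^2 > u*((2*u-3*p)*(2*u-p))" using 5 e6 by linarith
  have a: "2*u-p \<ge> p" "u+p \<ge> p" using up p0 by auto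
  have 7: "(2*u-p)*(u+p) \<ge> p*p" using a p0 by (intro mult_mono) auto
  have 8: "(2*u-3*p)*((2*u-p)*(u+p)) \<ge> (u-3*p)*(p*p)"
    using 7 up p0 by (intro mult_mono) auto
  have 9: "s*p^2*(u+p) > u*(u-3*p)*p^2"
  proof -
    have "u*(u-3*p)*p^2 \<le> u*((2*u-3*p)*((2*u-p)*(u+p)))" using 8 h
      by (simp add: power2_eq_square mult.assoc mult_left_mono)
    also have "\<dots> = u*((2*u-3*p)*(2*u-p))*(u+p)" by (simp add: algebra_simps)
    also have "\<dots> < s*p^2*(u+p)" using 6 p0 h by (intro mult_strict_right_mono) auto
    finally show ?thesis .
  qed
  hence "p^2*(u*(u-3*p)) < p^2*(s*(u+p))" by (simp add: algebra_simps)
  hence "u*(u-3*p) < s*(u+p)" using p0 by (simp add: mult_less_cancel_left)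
  thus ?thesis by (simp add: p_def algebra_simps)
qed
lemma sum_plus_univ: "(\<Sum>k\<in>(UNIV::('m::finite+'m) set). f k) = (\<Sum>i\<in>UNIV. f (Inl i)) + (\<Sum>i\<in>UNIV. f (Inr i))"
proof -
  have "sum f (UNIV::('m+'m) set) = sum f (UNIV <+> UNIV)" by (simp only: UNIV_Plus_UNIV)
  also have "\<dots> = sum (f \<circ> Inl) UNIV + sum (f \<circ> Inr) UNIV" by (rule sum.Plus) simp_all
  finally show ?thesis by (simp add: comp_def)
qed
lemma stack_inner: "stack a b \<bullet> stack c d = a \<bullet> c + b \<bullet> d"
  by (simp add: inner_vec_def stack_def sum_plus_univ)
lemma ifmul: "(if a = i then c else (0::real)) * x = (if a = i then c * x else 0)" by simp
lemma Qmv: "Qmat beta s tau theta *v stack y g =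
   stack (((3 - 3 * tau - 2 * s) * beta) *\<^sub>R y + (2 * (1 - tau - s)) *\<^sub>R g)
         ((2 * (1 - tau - s)) *\<^sub>R y + ((4 - tau - theta - 2 * s) / beta) *\<^sub>R g)"
  apply (simp add: vec_eq_iff matrix_vector_mult_def)
  apply (rule allI)
  subgoal for k by (cases k) (simp_all add: Qmat_def stack_def sum_plus_univ ifmul sum.delta)
  done
lemma Qsym: "transpose (Qmat beta s tau theta) = Qmat beta s tau theta"
  apply (simp add: vec_eq_iff transpose_def Qmat_def)
  apply (intro allI) subgoal for i j by (cases i; cases j) auto done
lemma stack_surj: "x = stack (\<chi> i. x $ Inl i) (\<chi> i. x $ Inr i)"
  by (simp add: vec_eq_iff stack_def split: sum.split)
lemma stack_L[simp]: "stack y g $ Inl i = y $ i" and stack_R[simp]: "stack y g $ Inr i = g $ i"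
  by (simp_all add: stack_def)
lemma stack_zero: "stack y g = 0 \<longleftrightarrow> y = 0 \<and> g = 0"
proof
  assume "stack y g = 0"
  then have "\<forall>i. stack y g $ Inl i = 0 \<and> stack y g $ Inr i = 0" by simp
  then show "y = 0 \<and> g = 0" by (simp add: vec_eq_iff)
next
  assume "y = 0 \<and> g = 0" then show "stack y g = 0"
    by (simp add: vec_eq_iff stack_def split: sum.split)
qed

lemma scalar_main:
  fixes s tau theta :: real
  assumes "0 \<le> s" "s < 1" "R_region s tau theta"
  shows "3 - 3 * tau - 2 * s > 0" "1 - tau - s > 0" "4 - tau - theta - 2 * s > 0"
    "(3 - 3 * tau - 2 * s) * (4 - tau - theta - 2 * s) > (2 * (1 - tau - s))^2"
proof -
  have r: "-1 < tau" "tau < 1 - s" "tau + theta > 0"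
    "(1 - tau^2) * (2 - tau - theta - s) - (1 - theta)^2 * (1 - tau - s) > 0"
    using assms(3) unfolding R_region_def by auto
  define u where "u = 1 - tau - s"
  define w where "w = 1 + tau"
  define v where "v = 2 - tau - theta - s"
  have u0: "u > 0" and w0: "w > 0" using r by (auto simp: u_def w_def)
  have t2: "1 - tau^2 = (u + s) * w" by (simp add: u_def w_def power2_eq_square algebra_simps)
  have t3: "1 - theta = v - u" by (simp add: u_def v_def)
  have R: "(u + s) * w * v > (u - v)^2 * u"
  proof -
    have "(1 - tau^2) * v - (1 - theta)^2 * u > 0" unfolding u_def v_def by (rule r(4))
    hence "(u + s) * w * v - (v - u)^2 * u > 0" by (simp only: t2 t3)
    moreover have "(v - u)^2 = (u - v)^2" by (simp add: power2_commute)
    ultimately show ?thesis by simp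
  qed
  have v0: "v > 0"
  proof (rule ccontr)
    assume "\<not> v > 0"
    hence "(u + s) * w * v \<le> 0" using u0 w0 assms(1)
      by (simp add: mult_nonneg_nonpos)
    moreover have "(u - v)^2 * u \<ge> 0" using u0 by simp
    ultimately show False using R by linarith
  qed
  have ed: "4 - tau - theta - 2 * s = u + v + w" by (simp add: u_def v_def w_def)
  have ea: "3 - 3 * tau - 2 * s = 3 * u + s" by (simp add: u_def)
  show "3 - 3 * tau - 2 * s > 0" using ea u0 assms(1) by linarith
  show "1 - tau - s > 0" using u0 by (simp add: u_def)
  show "4 - tau - theta - 2 * s > 0" using ed u0 v0 w0 by linarith
  have diff: "(3 * u + s) * (u + v + w) - (2 * u)^2 = s * (u + v + w) - u * (u - 3 * (v + w))"
    by (simp add: algebra_simps power2_eq_square)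
  have "s * (u + v + w) > u * (u - 3 * (v + w))"
  proof (cases "u \<ge> 3 * (v + w)")
    case True
    then show ?thesis using key[OF u0 v0 w0 assms(1) R] by simp
  next
    case False
    hence "u * (u - 3 * (v + w)) < 0" using u0 by (simp add: mult_pos_neg)
    moreover have "s * (u + v + w) \<ge> 0" using assms(1) u0 v0 w0 by simp
    ultimately show ?thesis by linarith
  qed
  thus "(3 - 3 * tau - 2 * s) * (4 - tau - theta - 2 * s) > (2 * (1 - tau - s))^2"
  proof -
    have cu: "2 * (1 - tau - s) = 2 * u" by (simp add: u_def)
    show ?thesis unfolding ea ed cu using diff \<open>s * (u + v + w) > u * (u - 3 * (v + w))\<close> by linarith
  qed
qed

lemma qform:
  "Qnorm_sq (Qmat beta s tau theta) (stack y g) =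
     ((3 - 3 * tau - 2 * s) * beta) * (y \<bullet> y) + 2 * (2 * (1 - tau - s)) * (y \<bullet> g)
     + ((4 - tau - theta - 2 * s) / beta) * (g \<bullet> g)"
proof -
  have gy: "g \<bullet> y = y \<bullet> g" by (rule inner_commute)
  show ?thesis
    unfolding Qnorm_sq_def Qmv stack_inner inner_add_left inner_scaleR_left gy by linarith
qed

theorem proposition2p5:
  fixes beta s tau theta :: real
  assumes "beta > 0" and "0 \<le> s" and "s < 1" and "R_region s tau theta"
  shows "sym_pos_def (Qmat beta s tau theta :: real^('m + 'm)^('m + 'm))
         \<and> vartheta s tau theta > 0
         \<and> (\<forall>y g :: real^'m.
              Qnorm_sq (Qmat beta s tau theta) (stack y g)
                \<ge> - 2 * vartheta s tau theta * (y \<bullet> g))"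
proof -
  define a where "a = 3 - 3 * tau - 2 * s"
  define c where "c = 2 * (1 - tau - s)"
  define d where "d = 4 - tau - theta - 2 * s"
  note sc = scalar_main[OF assms(2,3,4)]
  have a0: "a > 0" and c0: "c > 0" and d0: "d > 0" and adc: "a * d > c^2"
    using sc by (auto simp: a_def c_def d_def)
  have q: "\<And>y g :: real^'m. Qnorm_sq (Qmat beta s tau theta) (stack y g) =
      (a * beta) * (y \<bullet> y) + 2 * c * (y \<bullet> g) + (d / beta) * (g \<bullet> g)"
    using qform by (simp add: a_def c_def d_def)
  have vt: "vartheta s tau theta = sqrt (a * d) - c"
    by (simp add: vartheta_def a_def c_def d_def)
  have vpos: "vartheta s tau theta > 0"
  proof -
    have "sqrt (c^2) < sqrt (a * d)" using adc by (simp only: real_sqrt_less_iff)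
    thus ?thesis using vt c0 by simp
  qed
  have pd: "\<forall>x :: real^('m+'m). x \<noteq> 0 \<longrightarrow> x \<bullet> (Qmat beta s tau theta *v x) > 0"
  proof (intro allI impI)
    fix x :: "real^('m+'m)"
    assume x0: "x \<noteq> 0"
    define y where "y = (\<chi> i. x $ Inl i)"
    define g where "g = (\<chi> i. x $ Inr i)"
    have xs: "x = stack y g" using stack_surj[of x] by (simp add: y_def g_def)
    have yg: "y \<noteq> 0 \<or> g \<noteq> 0" using x0 xs stack_zero by auto
    have eq: "x \<bullet> (Qmat beta s tau theta *v x) = Qnorm_sq (Qmat beta s tau theta) (stack y g)"
      by (simp add: Qnorm_sq_def xs inner_commute)
    have id: "(a * beta) * Qnorm_sq (Qmat beta s tau theta) (stack y g)
       = ((a * beta) *\<^sub>R y + c *\<^sub>R g) \<bullet> ((a * beta) *\<^sub>R y + c *\<^sub>R g) + (a * d - c^2) * (g \<bullet> g)"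
    proof -
      have gy: "g \<bullet> y = y \<bullet> g" by (rule inner_commute)
      have abd: "a * beta * (d / beta) = a * d" using assms(1) by simp
      have L: "(a * beta) * Qnorm_sq (Qmat beta s tau theta) (stack y g) =
          (a * beta) * (a * beta) * (y \<bullet> y) + 2 * ((a * beta) * c) * (y \<bullet> g)
          + (a * beta * (d / beta)) * (g \<bullet> g)"
        unfolding q by (simp only: distrib_left mult.assoc mult.left_commute)
      have R: "((a * beta) *\<^sub>R y + c *\<^sub>R g) \<bullet> ((a * beta) *\<^sub>R y + c *\<^sub>R g)
          = (a * beta) * (a * beta) * (y \<bullet> y) + 2 * ((a * beta) * c) * (y \<bullet> g) + (c * c) * (g \<bullet> g)"
        unfolding inner_add_left inner_add_right inner_scaleR_left inner_scaleR_right gy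
        by (simp only: distrib_left mult.assoc mult.left_commute)
      have C: "(a * d - c^2) * (g \<bullet> g) = a * d * (g \<bullet> g) - (c * c) * (g \<bullet> g)"
        by (simp only: power2_eq_square left_diff_distrib)
      have abd2: "a * beta * (d / beta) * (g \<bullet> g) = a * d * (g \<bullet> g)" using abd by simp
      show ?thesis using L R C abd2 by linarith
    qed
    have ab: "a * beta > 0" using a0 assms(1) by simp
    have "(a * beta) * Qnorm_sq (Qmat beta s tau theta) (stack y g) > 0"
    proof (cases "g = 0")
      case True
      hence "y \<noteq> 0" using yg by simp
      hence "y \<bullet> y > 0" by simp
      thus ?thesis using True ab by (simp add: q)
    next
      case False
      hence "g \<bullet> g > 0" by simp
      hence "(a * d - c^2) * (g \<bullet> g) > 0" using adc by simp
      moreover have "((a * beta) *\<^sub>R y + c *\<^sub>R g) \<bullet> ((a * beta) *\<^sub>R y + c *\<^sub>R g) \<ge> 0" by simp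
      ultimately show ?thesis using id by linarith
    qed
    hence "Qnorm_sq (Qmat beta s tau theta) (stack y g) > 0" using ab
      by (simp add: zero_less_mult_iff)
    thus "x \<bullet> (Qmat beta s tau theta *v x) > 0" using eq by simp
  qed
  have ineq: "\<forall>y g :: real^'m. Qnorm_sq (Qmat beta s tau theta) (stack y g)
                \<ge> - 2 * vartheta s tau theta * (y \<bullet> g)"
  proof (intro allI)
    fix y g :: "real^'m"
    define r1 where "r1 = sqrt (a * beta)"
    define r2 where "r2 = sqrt (d / beta)"
    have r1s: "r1 * r1 = a * beta" using a0 assms(1) by (simp add: r1_def)
    have r2s: "r2 * r2 = d / beta" using d0 assms(1) by (simp add: r2_def)
    have r12: "r1 * r2 = sqrt (a * d)"
      using assms(1) by (simp add: r1_def r2_def real_sqrt_mult[symmetric])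
    have "Qnorm_sq (Qmat beta s tau theta) (stack y g) + 2 * vartheta s tau theta * (y \<bullet> g)
        = (r1 *\<^sub>R y + r2 *\<^sub>R g) \<bullet> (r1 *\<^sub>R y + r2 *\<^sub>R g)"
    proof -
      have e1: "(r1 *\<^sub>R y + r2 *\<^sub>R g) \<bullet> (r1 *\<^sub>R y + r2 *\<^sub>R g)
          = (r1 * r1) * (y \<bullet> y) + 2 * (r1 * r2) * (y \<bullet> g) + (r2 * r2) * (g \<bullet> g)"
        unfolding inner_add_left inner_add_right inner_scaleR_left inner_scaleR_right inner_commute[of g y]
        by (simp only: distrib_left mult.assoc mult.left_commute)
      have e2: "r1 * r1 * (y \<bullet> y) = (a * beta) * (y \<bullet> y)" using r1s by simp
      have e3: "r2 * r2 * (g \<bullet> g) = (d / beta) * (g \<bullet> g)" using r2s by simp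
      have e4: "2 * (r1 * r2) * (y \<bullet> g) = 2 * sqrt (a * d) * (y \<bullet> g)" using r12 by simp
      have e5: "2 * (sqrt (a * d) - c) * (y \<bullet> g) = 2 * sqrt (a * d) * (y \<bullet> g) - 2 * c * (y \<bullet> g)"
        by (simp only: left_diff_distrib right_diff_distrib)
      show ?thesis unfolding e1 q vt using e2 e3 e4 e5 by linarith
    qed
    moreover have "(r1 *\<^sub>R y + r2 *\<^sub>R g) \<bullet> (r1 *\<^sub>R y + r2 *\<^sub>R g) \<ge> 0" by simp
    ultimately show "Qnorm_sq (Qmat beta s tau theta) (stack y g)
                \<ge> - 2 * vartheta s tau theta * (y \<bullet> g)" by linarith
  qed
  show ?thesis using pd vpos ineq Qsym by (simp add: sym_pos_def_def)
qed

end
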